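(* Let $y$ be a Lyndon word of length $n\ge 1$ over a totally ordered alphabet. Algorithm LeftLyndonTree (described in the context) applied to $y$ returns the root of a binary tree which is exactly the left Lyndon tree $\mathrm{LLT}(y)$ (with leaves $0,1,\dots,n-1$ in left-to-right order), and it runs in time $O(n)$, accessing letters of $y$ only through comparisons between letters.
   Context: Words are finite sequences $y=y[0]\cdots y[n-1]$ over a totally ordered alphabet. Lexicographic order $<$: $u<v$ if $u$ is a proper prefix of $v$, or $u=ras$, $v=rbt$ with $a<b$ letters. A Lyndon word is a non-empty word strictly smaller than each of its proper non-empty suffixes. Left Lyndon tree $\mathrm{LLT}(y)$ of a Lyndon word $y$: if $|y|=1$ it is a single leaf; otherwise $y=uv$ with $u$ the longest proper Lyndon prefix of $y$ (then $v$ is Lyndon), and $\mathrm{LLT}(y)$ has left subtree $\mathrm{LLT}(u)$ and right subtree $\mathrm{LLT}(v)$. Leaves, read left to right, are identified with positions $0,\dots,n-1$. Algorithm LeftLyndonTree (input: Lyndon word $y$ of length $n$; arrays lyns, root; internal nodes are fresh identifiers $\ge n$ with left/right child pointers): lyns[0] ← 1; root[0] ← 0; per ← 1; i ← 0. For j = 1 to n−1: root[j] ← j; if y[j] ≠ y[i] then { lyns[j] ← j+1; per ← j+1; i ← 0 } else { lyns[j] ← lyns[i]; i ← (i+1) mod per }; ℓ ← 1; k ← j−1; while ℓ < lyns[j]: { create a new internal node q with left child root[k] and right child root[j]; root[j] ← q; ℓ ← ℓ + lyns[k]; k ← k − lyns[k] }. Return root[n−1]. *)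

theory Defs
  imports Main "HOL-Library.While_Combinator"
begin

definition word_less :: "'a::linorder list \<Rightarrow> 'a list \<Rightarrow> bool" where
  "word_less u v \<longleftrightarrow> (u, v) \<in> lexord {(a, b). a < b}"

definition lyndon :: "'a::linorder list \<Rightarrow> bool" where
  "lyndon y \<longleftrightarrow> y \<noteq> [] \<and> (\<forall>k. 0 < k \<and> k < length y \<longrightarrow> word_less y (drop k y))"

definition longest_proper_lyndon_prefix :: "'a::linorder list \<Rightarrow> 'a list \<Rightarrow> bool" where
  "longest_proper_lyndon_prefix u y \<longleftrightarrow>
     0 < length u \<and> length u < length y \<and> u = take (length u) y \<and> lyndon u \<and>
     (\<forall>m. length u < m \<and> m < length y \<longrightarrow> \<not> lyndon (take m y))"

datatype ltree = Leaf nat | Node ltree ltree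

text \<open>is_llt y off t: t is the left Lyndon tree of y, leaves numbered from off\<close>
inductive is_llt :: "'a::linorder list \<Rightarrow> nat \<Rightarrow> ltree \<Rightarrow> bool" where
  llt_leaf: "length y = 1 \<Longrightarrow> is_llt y off (Leaf off)"
| llt_node: "\<lbrakk> length y \<ge> 2; longest_proper_lyndon_prefix u y;
              is_llt u off lt; is_llt (drop (length u) y) (off + length u) rt \<rbrakk>
             \<Longrightarrow> is_llt y off (Node lt rt)"

text \<open>The algorithm accesses the word only through the letter comparison oracle
  eq i j (meaning y[i] = y[j]). Internal nodes are represented directly as tree values.
  cost counts outer-loop iterations plus inner while-loop iterations.\<close>

record alg_state =
  lyns :: "nat \<Rightarrow> nat"
  root :: "nat \<Rightarrow> ltree"
  per :: nat
  ii :: nat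
  cost :: nat

definition alg_init :: alg_state where
  "alg_init = \<lparr> lyns = (\<lambda>_. 0)(0 := 1), root = (\<lambda>_. Leaf 0)(0 := Leaf 0),
               per = 1, ii = 0, cost = 0 \<rparr>"

text \<open>inner while loop; state (root[j], l, k, count)\<close>
definition inner_loop ::
  "(nat \<Rightarrow> nat) \<Rightarrow> (nat \<Rightarrow> ltree) \<Rightarrow> nat \<Rightarrow> (ltree \<times> nat \<times> nat \<times> nat) option" where
  "inner_loop ly rt j =
     while_option (\<lambda>(q, l, k, c). l < ly j)
                  (\<lambda>(q, l, k, c). (Node (rt k) q, l + ly k, k - ly k, Suc c))
                  (Leaf j, 1, j - 1, 0)"

definition alg_step :: "(nat \<Rightarrow> nat \<Rightarrow> bool) \<Rightarrow> nat \<Rightarrow> alg_state \<Rightarrow> alg_state option" where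
  "alg_step eq j s =
     (let s1 = (if \<not> eq j (ii s)
                then s\<lparr> lyns := (lyns s)(j := j + 1), per := j + 1, ii := 0 \<rparr>
                else s\<lparr> lyns := (lyns s)(j := lyns s (ii s)), ii := (ii s + 1) mod per s \<rparr>)
      in map_option (\<lambda>(q, l, k, c). s1\<lparr> root := (root s1)(j := q), cost := cost s1 + 1 + c \<rparr>)
           (inner_loop (lyns s1) (root s1) j))"

primrec alg_run :: "(nat \<Rightarrow> nat \<Rightarrow> bool) \<Rightarrow> nat \<Rightarrow> alg_state option" where
  "alg_run eq 0 = Some alg_init"
| "alg_run eq (Suc m) = Option.bind (alg_run eq m) (alg_step eq (Suc m))"

definition left_lyndon_tree :: "nat \<Rightarrow> (nat \<Rightarrow> nat \<Rightarrow> bool) \<Rightarrow> (ltree \<times> nat) option" where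
  "left_lyndon_tree n eq = map_option (\<lambda>s. (root s (n - 1), cost s)) (alg_run eq (n - 1))"

end

theory Submission
  imports Defs
begin


lemma wl_lexordp: "word_less u v \<longleftrightarrow> ord_class.lexordp u v"
  by (simp add: word_less_def lexordp_conv_lexord)

lemma wl_irrefl: "\<not> word_less u u"
  by (simp add: wl_lexordp lexordp_irreflexive')

lemma wl_trans: "word_less u v \<Longrightarrow> word_less v w \<Longrightarrow> word_less u w"
  unfolding wl_lexordp by (rule lexordp_trans)

lemma wl_linear: "word_less u v \<or> u = v \<or> word_less v u"
  unfolding wl_lexordp by (rule lexordp_linear)

lemma wl_le_trans: "\<not> word_less v u \<Longrightarrow> \<not> word_less w v \<Longrightarrow> \<not> word_less w u"
  using wl_linear[of u v] wl_trans[of w u v] by blast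

lemma wl_le_less_trans: "\<not> word_less v u \<Longrightarrow> word_less v w \<Longrightarrow> word_less u w"
  using wl_linear[of u v] wl_trans[of u v w] by blast

lemma wl_iff: "word_less u v \<longleftrightarrow> (length u < length v \<and> take (length u) v = u) \<or>
   (\<exists>i<min (length u) (length v). take i u = take i v \<and> u!i < v!i)"
  by (simp add: word_less_def lexord_take_index_conv)

definition wlx :: "'a::linorder list \<Rightarrow> 'a list \<Rightarrow> nat \<Rightarrow> bool" where
  "wlx u v d \<longleftrightarrow> d < length u \<and> d < length v \<and> (\<forall>i<d. u!i = v!i) \<and> u!d < v!d"

lemma wlx_wl: "wlx u v d \<Longrightarrow> word_less u v"
proof -
  assume "wlx u v d"
  hence "d < min (length u) (length v)" "take d u = take d v" "u!d < v!d"
    unfolding wlx_def by (auto intro: nth_equalityI)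
  thus ?thesis unfolding wl_iff by blast
qed

lemma wlx_app: "wlx u v d \<Longrightarrow> wlx (u@a) (v@b) d"
  unfolding wlx_def by (auto simp: nth_append)

lemma take_eq_nth: "take i u = take i v \<Longrightarrow> j < i \<Longrightarrow> u!j = v!j"
  by (metis nth_take)

lemma wl_wlx: "word_less u v \<Longrightarrow> length v \<le> length u \<Longrightarrow> \<exists>d. wlx u v d"
proof -
  assume w: "word_less u v" and l: "length v \<le> length u"
  then obtain i where "i<min (length u) (length v)" "take i u = take i v" "u!i < v!i"
    unfolding wl_iff by auto
  thus ?thesis unfolding wlx_def using take_eq_nth by (intro exI[of _ i]) auto
qed

lemma wl_wlx': "word_less u v \<Longrightarrow> \<not> (length u < length v \<and> take (length u) v = u) \<Longrightarrow> \<exists>d. wlx u v d"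
proof -
  assume w: "word_less u v" and l: "\<not> (length u < length v \<and> take (length u) v = u)"
  then obtain i where "i<min (length u) (length v)" "take i u = take i v" "u!i < v!i"
    unfolding wl_iff by auto
  thus ?thesis unfolding wlx_def using take_eq_nth by (intro exI[of _ i]) auto
qed

lemma prefix_wl: "length u < length v \<Longrightarrow> take (length u) v = u \<Longrightarrow> word_less u v"
  unfolding wl_iff by blast

lemma prefix_not_wl: "take (length u) v = u \<Longrightarrow> \<not> word_less v u"
proof
  assume t: "take (length u) v = u" and w: "word_less v u"
  have "length (take (length u) v) = length u" using t by simp
  hence lu: "length u \<le> length v" by simp
  from w lu obtain d where "wlx v u d"
    using wl_iff by (metis linorder_not_le wl_wlx')
  hence "d < length u" "v!d < u!d" unfolding wlx_def by auto
  moreover have "u!d = v!d" using t \<open>d < length u\<close> by (metis nth_take)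
  ultimately show False by simp
qed

lemma wl_same_pref: "word_less (x@u) (x@v) \<longleftrightarrow> word_less u v"
  unfolding word_less_def by (simp add: lexord_same_pref_iff)

lemma lyndon_suffix: "lyndon w \<Longrightarrow> 0 < k \<Longrightarrow> k < length w \<Longrightarrow> word_less w (drop k w)"
  unfolding lyndon_def by blast

lemma lyndon_single: "lyndon [a]"
  unfolding lyndon_def by auto

lemma lyndon_nonempty: "lyndon u \<Longrightarrow> u \<noteq> []"
  unfolding lyndon_def by blast

lemma wlx_prefix_ext: "word_less u v \<Longrightarrow> \<not> (length u < length v \<and> take (length u) v = u) \<Longrightarrow> word_less (u@a) (v@b)"
  using wl_wlx' wlx_app wlx_wl by blast

lemma lyndon_concat:
  assumes u: "lyndon u" and v: "lyndon v" and uv: "word_less u v"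
  shows "lyndon (u@v)"
  unfolding lyndon_def
proof (intro conjI allI impI)
  show "u @ v \<noteq> []" using u by (simp add: lyndon_def)
  fix k assume k: "0 < k \<and> k < length (u @ v)"
  have uvv: "word_less (u@v) v"
  proof (cases "length u < length v \<and> take (length u) v = u")
    case True
    then obtain w where vw: "v = u @ w" by (metis append_take_drop_id)
    have lu: "length u > 0" using u by (simp add: lyndon_def)
    have "length u < length v" using True by simp
    hence "word_less v (drop (length u) v)" using lyndon_suffix[OF v lu] by simp
    hence "word_less v w" using vw by simp
    hence "word_less (u@v) (u@w)" using wl_same_pref by blast
    thus ?thesis using vw by simp
  next
    case False
    from wlx_prefix_ext[OF uv False, of v "[]"] show ?thesis by simp
  qed
  show "word_less (u @ v) (drop k (u @ v))"
  proof (cases "k < length u")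
    case True
    have "word_less u (drop k u)" using lyndon_suffix[OF u] k True by simp
    moreover have "\<not> (length u < length (drop k u))" by simp
    ultimately have "word_less (u@v) (drop k u @ v)" using wlx_prefix_ext by blast
    thus ?thesis using True by simp
  next
    case False
    show ?thesis
    proof (cases "k = length u")
      case True thus ?thesis using uvv by simp
    next
      case False
      hence k2: "0 < k - length u" "k - length u < length v" using k \<open>\<not> k < length u\<close> by auto
      have "word_less v (drop (k - length u) v)" using lyndon_suffix[OF v k2(1) k2(2)] .
      hence "word_less (u@v) (drop (k - length u) v)" using uvv wl_trans by blast
      thus ?thesis using \<open>\<not> k < length u\<close> by simp
    qed
  qed
qed

definition seg :: "'a list \<Rightarrow> nat \<Rightarrow> nat \<Rightarrow> 'a list" where
  "seg y a b = take (b - a) (drop a y)"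

lemma seg_length[simp]: "b \<le> length y \<Longrightarrow> length (seg y a b) = b - a"
  unfolding seg_def by simp

lemma seg_nth: "b \<le> length y \<Longrightarrow> i < b - a \<Longrightarrow> seg y a b ! i = y ! (a + i)"
  unfolding seg_def by simp

lemma seg_append: "a \<le> b \<Longrightarrow> b \<le> c \<Longrightarrow> seg y a c = seg y a b @ seg y b c"
proof -
  assume ab: "a \<le> b" and bc: "b \<le> c"
  have "c - a = (b - a) + (c - b)" using ab bc by simp
  hence "seg y a c = take (b - a) (drop a y) @ take (c - b) (drop (b - a) (drop a y))"
    unfolding seg_def by (simp add: take_add)
  also have "drop (b - a) (drop a y) = drop b y" using ab by simp
  finally show ?thesis unfolding seg_def .
qed

lemma seg_take: "a \<le> b \<Longrightarrow> b \<le> c \<Longrightarrow> c \<le> length y \<Longrightarrow> take (b - a) (seg y a c) = seg y a b"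
  using seg_append[of a b c y] by simp

lemma seg_drop: "a \<le> b \<Longrightarrow> b \<le> c \<Longrightarrow> c \<le> length y \<Longrightarrow> drop (b - a) (seg y a c) = seg y b c"
  using seg_append[of a b c y] by simp

lemma seg_full: "seg y 0 (length y) = y"
  unfolding seg_def by simp

lemma seg_single: "a < length y \<Longrightarrow> seg y a (Suc a) = [y!a]"
  unfolding seg_def by (simp add: take_Suc_conv_app_nth)

lemma seg_eqI: "b \<le> length y \<Longrightarrow> b' \<le> length y \<Longrightarrow> b - a = b' - a' \<Longrightarrow>
   (\<And>i. i < b - a \<Longrightarrow> y!(a+i) = y!(a'+i)) \<Longrightarrow> seg y a b = seg y a' b'"
proof -
  assume h: "b \<le> length y" "b' \<le> length y" "b - a = b' - a'" "\<And>i. i < b - a \<Longrightarrow> y!(a+i) = y!(a'+i)"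
  show ?thesis
  proof (rule nth_equalityI)
    show "length (seg y a b) = length (seg y a' b')" using h by simp
    fix i assume "i < length (seg y a b)"
    hence i: "i < b - a" using h by simp
    have "seg y a b ! i = y!(a+i)" using seg_nth[OF h(1) i] .
    moreover have "seg y a' b' ! i = y!(a'+i)" using seg_nth[OF h(2)] i h(3) by simp
    ultimately show "seg y a b ! i = seg y a' b' ! i" using h(4)[OF i] by simp
  qed
qed

lemma seg_suffix_less:
  assumes "t < s" "s < p" "p \<le> e" "e \<le> length y" "word_less (seg y t p) (seg y s p)"
  shows "word_less (seg y t e) (seg y s e)"
proof -
  have "\<not> (length (seg y t p) < length (seg y s p))" using assms by simp
  hence "word_less (seg y t p @ seg y p e) (seg y s p @ seg y p e)"
    using wlx_prefix_ext assms(5) by blast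
  moreover have "seg y t e = seg y t p @ seg y p e" "seg y s e = seg y s p @ seg y p e"
    using seg_append[of t p e y] seg_append[of s p e y] assms by simp_all
  ultimately show ?thesis by simp
qed

lemma lyndon_seg_suffix:
  assumes "lyndon (seg y t e)" "t < s" "s < e" "e \<le> length y"
  shows "word_less (seg y t e) (seg y s e)"
proof -
  have "word_less (seg y t e) (drop (s - t) (seg y t e))"
    using lyndon_suffix[OF assms(1)] assms by simp
  moreover have "drop (s - t) (seg y t e) = seg y s e" using seg_drop[of t s e y] assms by simp
  ultimately show ?thesis by simp
qed

lemma lyndon_segI:
  assumes "t < e" "e \<le> length y" "\<And>s. t < s \<Longrightarrow> s < e \<Longrightarrow> word_less (seg y t e) (seg y s e)"
  shows "lyndon (seg y t e)"
  unfolding lyndon_def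
proof (intro conjI allI impI)
  show "seg y t e \<noteq> []" using assms(1,2) by (metis seg_length less_numeral_extra(3) list.size(3) zero_less_diff)
  fix k assume k: "0 < k \<and> k < length (seg y t e)"
  have tk: "t + k \<le> e" using k assms(1,2) by auto
  have "drop ((t+k) - t) (seg y t e) = seg y (t + k) e" using seg_drop[of t "t+k" e y] assms tk by simp
  hence "drop k (seg y t e) = seg y (t + k) e" by simp
  thus "word_less (seg y t e) (drop k (seg y t e))" using assms(3)[of "t+k"] k assms(1,2) by auto
qed

lemma lyndon_overlap:
  assumes x: "lyndon (seg y t p)" and w: "lyndon (seg y S e)"
    and o: "t < S" "S < p" "p < e" "e \<le> length y"
  shows "lyndon (seg y t e)"
proof (rule lyndon_segI)
  show "t < e" "e \<le> length y" using o by auto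
  have A: "word_less (seg y t e) (seg y S e)"
    using seg_suffix_less[OF o(1,2) _ o(4) lyndon_seg_suffix[OF x o(1,2)]] o by simp
  fix s assume s: "t < s" "s < e"
  show "word_less (seg y t e) (seg y s e)"
  proof (cases "s < S")
    case True
    have "word_less (seg y t p) (seg y s p)" using lyndon_seg_suffix[OF x s(1)] True o by simp
    thus ?thesis using seg_suffix_less[OF s(1), of p e] True o by simp
  next
    case False
    show ?thesis
    proof (cases "s = S")
      case True thus ?thesis using A by simp
    next
      case False
      hence "word_less (seg y S e) (seg y s e)" using lyndon_seg_suffix[OF w] \<open>\<not> s < S\<close> s o by simp
      thus ?thesis using A wl_trans by blast
    qed
  qed
qed

definition isLS :: "'a::linorder list \<Rightarrow> nat \<Rightarrow> nat \<Rightarrow> bool" where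
  "isLS y p L \<longleftrightarrow> 0 < L \<and> L \<le> p \<and> lyndon (seg y (p-L) p) \<and>
     (\<forall>M. L < M \<and> M \<le> p \<longrightarrow> \<not> lyndon (seg y (p-M) p))"

definition LSf :: "'a::linorder list \<Rightarrow> nat \<Rightarrow> nat" where
  "LSf y p = (GREATEST L. 0 < L \<and> L \<le> p \<and> lyndon (seg y (p-L) p))"

lemma LSf_isLS:
  assumes p: "0 < p" "p \<le> length y"
  shows "isLS y p (LSf y p)"
proof -
  let ?P = "\<lambda>L. 0 < L \<and> L \<le> p \<and> lyndon (seg y (p-L) p)"
  have "seg y (p-1) p = [y!(p-1)]" using seg_single[of "p-1" y] p by simp
  hence P1: "?P 1" using p lyndon_single by simp
  have b: "\<And>L. ?P L \<Longrightarrow> L \<le> p" by simp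
  have G: "?P (LSf y p)" unfolding LSf_def using GreatestI_nat[of ?P 1 p, OF P1 b] .
  have "\<And>M. ?P M \<Longrightarrow> M \<le> LSf y p" unfolding LSf_def using Greatest_le_nat[of ?P _ p] b by blast
  hence "\<forall>M. LSf y p < M \<and> M \<le> p \<longrightarrow> \<not> lyndon (seg y (p-M) p)"
    by (metis le_less_trans less_irrefl gr_zeroI not_less0)
  thus ?thesis using G unfolding isLS_def by blast
qed

lemma isLS_unique: "isLS y p L \<Longrightarrow> isLS y p L' \<Longrightarrow> L = L'"
  unfolding isLS_def by (meson linorder_neqE_nat)

lemma LSf_eq: "0 < p \<Longrightarrow> p \<le> length y \<Longrightarrow> isLS y p L \<Longrightarrow> LSf y p = L"
  using LSf_isLS isLS_unique by blast

lemma LSf_pos: "0 < p \<Longrightarrow> p \<le> length y \<Longrightarrow> 0 < LSf y p"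
  using LSf_isLS unfolding isLS_def by blast

lemma LSf_le: "0 < p \<Longrightarrow> p \<le> length y \<Longrightarrow> LSf y p \<le> p"
  using LSf_isLS unfolding isLS_def by blast

lemma LSf_lyndon: "0 < p \<Longrightarrow> p \<le> length y \<Longrightarrow> lyndon (seg y (p - LSf y p) p)"
  using LSf_isLS unfolding isLS_def by blast

lemma LSf_max: "0 < p \<Longrightarrow> p \<le> length y \<Longrightarrow> t < p - LSf y p \<Longrightarrow> \<not> lyndon (seg y t p)"
proof
  assume h: "0 < p" "p \<le> length y" "t < p - LSf y p" "lyndon (seg y t p)"
  have "LSf y p < p - t" "p - t \<le> p" using h by auto
  hence "\<not> lyndon (seg y (p - (p-t)) p)" using LSf_isLS[OF h(1,2)] unfolding isLS_def by blast
  moreover have "p - (p - t) = t" using h by simp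
  ultimately show False using h(4) by simp
qed

text \<open>maximality lemma: consecutive factors of the chain are non-increasing\<close>
lemma chain_noninc:
  assumes p: "0 < q" "q < pp" "pp \<le> length y" "q = pp - LSf y pp"
  shows "\<not> word_less (seg y (q - LSf y q) q) (seg y q pp)"
proof
  assume w: "word_less (seg y (q - LSf y q) q) (seg y q pp)"
  have l1: "lyndon (seg y (q - LSf y q) q)" using LSf_lyndon[of q y] p by simp
  have l2: "lyndon (seg y q pp)" using LSf_lyndon[of pp y] p by simp
  have "lyndon (seg y (q - LSf y q) q @ seg y q pp)" using lyndon_concat[OF l1 l2 w] .
  moreover have "seg y (q - LSf y q) q @ seg y q pp = seg y (q - LSf y q) pp"
    using seg_append[of "q - LSf y q" q pp y] p by simp
  moreover have "q - LSf y q < pp - LSf y pp" using p LSf_pos[of q y] by simp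
  ultimately show False using LSf_max[of pp y "q - LSf y q"] p by simp
qed

function phi :: "'a::linorder list \<Rightarrow> nat \<Rightarrow> nat" where
  "phi y p = (if p = 0 then 0 else Suc (phi y (p - max 1 (LSf y p))))"
  by auto
termination by (relation "measure (\<lambda>(y,p). p)") auto

lemma phi_step: "0 < p \<Longrightarrow> p \<le> length y \<Longrightarrow> phi y p = Suc (phi y (p - LSf y p))"
proof -
  assume "0 < p" "p \<le> length y"
  hence "max 1 (LSf y p) = LSf y p" using LSf_pos[of p y] by simp
  thus ?thesis using \<open>0 < p\<close> by simp
qed

declare phi.simps[simp del]




definition Rp :: "'a::linorder list \<Rightarrow> nat \<Rightarrow> nat \<Rightarrow> 'a list \<Rightarrow> bool" where
  "Rp y J p M \<longleftrightarrow> (\<forall>m. p < m \<and> m \<le> J \<longrightarrow> (\<exists>b. p \<le> b \<and> b < m \<and> \<not> word_less M (seg y b m)))"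

definition Inner :: "'a::linorder list \<Rightarrow> nat \<Rightarrow> nat \<Rightarrow> ltree \<Rightarrow> nat \<Rightarrow> nat \<Rightarrow> nat \<Rightarrow> bool" where
  "Inner y J L q l k c \<longleftrightarrow> 1 \<le> l \<and> l \<le> L \<and> k = J - l \<and>
     is_llt (seg y (Suc J - l) (Suc J)) (Suc J - l) q \<and> c + phi y (Suc J - l) = phi y J \<and>
     (l = 1 \<or> (\<exists>pp. Suc J - l < pp \<and> pp \<le> J \<and> Suc J - l = pp - LSf y pp \<and>
        Rp y J (Suc J - l) (seg y (Suc J - l) pp)))"

lemma inner_step:
  fixes y :: "'a::linorder list"
  assumes J: "Suc J \<le> length y"
    and ly: "\<forall>t \<le> J. ly t = LSf y (Suc t)"
    and rt: "\<forall>t < J. is_llt (seg y (Suc t - ly t) (Suc t)) (Suc t - ly t) (rt t)"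
    and inv: "Inner y J (ly J) q l k c" and lt: "l < ly J"
  shows "Inner y J (ly J) (Node (rt k) q) (l + ly k) (k - ly k) (Suc c)"
proof -
  define L where "L = ly J"
  define p where "p = Suc J - l"
  define S where "S = Suc J - L"
  have L: "L = LSf y (Suc J)" using ly L_def by simp
  have Lle: "L \<le> Suc J" using LSf_le[of "Suc J" y] J L by simp
  have I: "1 \<le> l" "l \<le> L" "k = J - l" "is_llt (seg y p (Suc J)) p q" "c + phi y p = phi y J"
    "l = 1 \<or> (\<exists>pp. p < pp \<and> pp \<le> J \<and> p = pp - LSf y pp \<and> Rp y J p (seg y p pp))"
    using inv unfolding Inner_def p_def L_def by auto
  have lL: "l < L" using lt L_def by simp
  have pS: "S < p" using lL Lle I(1) unfolding p_def S_def by simp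
  have pJ: "p \<le> J" "0 < p" using I(1) pS unfolding p_def by auto
  have kp: "k = p - 1" "Suc k = p" using I(3) pJ unfolding p_def by auto
  define Lk where "Lk = LSf y p"
  have lyk: "ly k = Lk" using ly kp pJ unfolding Lk_def by auto
  have Lk: "0 < Lk" "Lk \<le> p" using LSf_pos[of p y] LSf_le[of p y] pJ J unfolding Lk_def by auto
  define t where "t = p - Lk"
  have xl: "lyndon (seg y t p)" using LSf_lyndon[of p y] pJ J unfolding t_def Lk_def by simp
  have wl: "lyndon (seg y S (Suc J))" using LSf_lyndon[of "Suc J" y] J unfolding S_def L by simp
  have tS: "S \<le> t"
  proof (rule ccontr)
    assume "\<not> S \<le> t"
    hence "lyndon (seg y t (Suc J))" using lyndon_overlap[OF xl wl] pS pJ J by simp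
    moreover have "t < Suc J - LSf y (Suc J)" using \<open>\<not> S \<le> t\<close> unfolding S_def L by simp
    ultimately show False using LSf_max[of "Suc J" y t] J by simp
  qed
  have tp: "t < p" using Lk unfolding t_def by simp
  have newp: "Suc J - (l + Lk) = t" unfolding t_def p_def using I(1) lL Lle by simp
  have dom: "\<exists>b. p \<le> b \<and> b < m \<and> \<not> word_less (seg y t p) (seg y b m)" if m: "p < m" "m \<le> J" for m
  proof -
    have "l \<noteq> 1" using m unfolding p_def by simp
    then obtain pp where pp: "p < pp" "pp \<le> J" "p = pp - LSf y pp" "Rp y J p (seg y p pp)" using I(6) by blast
    then obtain b where b: "p \<le> b" "b < m" "\<not> word_less (seg y p pp) (seg y b m)"
      using m unfolding Rp_def by blast
    have "\<not> word_less (seg y (p - LSf y p) p) (seg y p pp)"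
      using chain_noninc[of p pp y] pp pJ J by simp
    hence "\<not> word_less (seg y t p) (seg y p pp)" unfolding t_def Lk_def .
    hence "\<not> word_less (seg y t p) (seg y b m)" using b(3) wl_le_trans by blast
    thus ?thesis using b by blast
  qed
  have lplp: "longest_proper_lyndon_prefix (seg y t p) (seg y t (Suc J))"
    unfolding longest_proper_lyndon_prefix_def
  proof (intro conjI allI impI)
    show "0 < length (seg y t p)" using tp pJ J by simp
    show "length (seg y t p) < length (seg y t (Suc J))" using tp pJ J by simp
    show "seg y t p = take (length (seg y t p)) (seg y t (Suc J))"
      using seg_take[of t p "Suc J" y] tp pJ J by simp
    show "lyndon (seg y t p)" by (rule xl)
    fix m assume m: "length (seg y t p) < m \<and> m < length (seg y t (Suc J))"
    define m' where "m' = t + m"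
    have m': "p < m'" "m' \<le> J" using m tp pJ J unfolding m'_def by auto
    have tk: "take m (seg y t (Suc J)) = seg y t m'"
      using seg_take[of t m' "Suc J" y] m' tp J unfolding m'_def by simp
    obtain b where b: "p \<le> b" "b < m'" "\<not> word_less (seg y t p) (seg y b m')" using dom[OF m'] by blast
    show "\<not> lyndon (take m (seg y t (Suc J)))"
    proof
      assume "lyndon (take m (seg y t (Suc J)))"
      hence "lyndon (seg y t m')" using tk by simp
      hence "word_less (seg y t m') (seg y b m')" using lyndon_seg_suffix[of y t m' b] b tp m' J by simp
      moreover have "word_less (seg y t p) (seg y t m')"
        using prefix_wl[of "seg y t p" "seg y t m'"] seg_take[of t p m' y] m' tp J by simp
      ultimately show False using b(3) wl_trans by blast
    qed
  qed
  have "k < J" using kp pJ by simp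
  hence "is_llt (seg y (Suc k - ly k) (Suc k)) (Suc k - ly k) (rt k)" using rt by blast
  hence rtk: "is_llt (seg y t p) t (rt k)" unfolding kp(2) lyk t_def .
  have dr: "drop (length (seg y t p)) (seg y t (Suc J)) = seg y p (Suc J)"
    using seg_drop[of t p "Suc J" y] tp pJ J by simp
  have tree: "is_llt (seg y t (Suc J)) t (Node (rt k) q)"
  proof (rule llt_node[OF _ lplp rtk])
    show "2 \<le> length (seg y t (Suc J))" using tp pJ J newp I(1) Lk by simp
    show "is_llt (drop (length (seg y t p)) (seg y t (Suc J))) (t + length (seg y t p)) q"
      using dr I(4) tp pJ J by simp
  qed
  have ph: "phi y p = Suc (phi y t)" using phi_step[of p y] pJ J unfolding t_def Lk_def by simp
  have Rnew: "Rp y J t (seg y t p)"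
    unfolding Rp_def
  proof (intro allI impI)
    fix m assume m: "t < m \<and> m \<le> J"
    show "\<exists>b\<ge>t. b < m \<and> \<not> word_less (seg y t p) (seg y b m)"
    proof (cases "m \<le> p")
      case True
      have "take (length (seg y t m)) (seg y t p) = seg y t m"
        using seg_take[of t m p y] True m pJ J by simp
      hence "\<not> word_less (seg y t p) (seg y t m)" by (rule prefix_not_wl)
      thus ?thesis using m by blast
    next
      case False
      hence "p < m" by simp
      then obtain b where "p \<le> b" "b < m" "\<not> word_less (seg y t p) (seg y b m)" using dom m by blast
      thus ?thesis using tp by (intro exI[of _ b]) auto
    qed
  qed
  show ?thesis
    unfolding Inner_def
  proof (intro conjI)
    show "1 \<le> l + ly k" using I(1) by simp
    show "l + ly k \<le> ly J" using newp tS lyk I(1) lL Lle Lk(2) unfolding S_def L_def t_def p_def by linarith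
    show "k - ly k = J - (l + ly k)" using I(3) lyk by simp
    show "is_llt (seg y (Suc J - (l + ly k)) (Suc J)) (Suc J - (l + ly k)) (Node (rt k) q)"
      using tree newp lyk by simp
    show "Suc c + phi y (Suc J - (l + ly k)) = phi y J" using newp lyk ph I(5) by simp
    show "l + ly k = 1 \<or> (\<exists>pp. Suc J - (l + ly k) < pp \<and> pp \<le> J \<and> Suc J - (l + ly k) = pp - LSf y pp \<and>
        Rp y J (Suc J - (l + ly k)) (seg y (Suc J - (l + ly k)) pp))"
      using newp lyk Rnew tp pJ unfolding t_def Lk_def by (intro disjI2 exI[of _ p]) auto
  qed
qed

lemma inner_loop_correct:
  fixes y :: "'a::linorder list"
  assumes J: "Suc J \<le> length y"
    and ly: "\<forall>t \<le> J. ly t = LSf y (Suc t)"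
    and rt: "\<forall>t < J. is_llt (seg y (Suc t - ly t) (Suc t)) (Suc t - ly t) (rt t)"
  shows "\<exists>q l k c. inner_loop ly rt J = Some (q,l,k,c) \<and>
     is_llt (seg y (Suc J - ly J) (Suc J)) (Suc J - ly J) q \<and> c + phi y (Suc J) = Suc (phi y J)"
proof -
  define b where "b = (\<lambda>(q::ltree, l::nat, k::nat, c::nat). l < ly J)"
  define cc where "cc = (\<lambda>(q, l, k, c::nat). (Node (rt k) q, l + ly k, k - ly k, Suc c))"
  define P where "P = (\<lambda>(q, l, k, c). Inner y J (ly J) q l k c)"
  define f where "f = (\<lambda>(q::ltree, l::nat, k::nat, c::nat). ly J - l)"
  have LJ: "ly J = LSf y (Suc J)" using ly by simp
  have LJpos: "0 < ly J" "ly J \<le> Suc J" using LJ LSf_pos[of "Suc J" y] LSf_le[of "Suc J" y] J by auto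
  have step: "P (cc s) \<and> f (cc s) < f s" if "P s" "b s" for s
  proof -
    obtain q l k c where s: "s = (q,l,k,c)" by (cases s) auto
    have inv: "Inner y J (ly J) q l k c" and lt: "l < ly J" using that s unfolding P_def b_def by auto
    have "k = J - l" "1 \<le> l" using inv unfolding Inner_def by auto
    hence "k < J" using lt LJpos by linarith
    hence "0 < ly k" using ly LSf_pos[of "Suc k" y] J by simp
    thus ?thesis using inner_step[OF J ly rt inv lt] s lt unfolding P_def cc_def f_def by simp
  qed
  have init: "P (Leaf J, 1, J - 1, 0)"
  proof -
    have "seg y J (Suc J) = [y!J]" using seg_single[of J y] J by simp
    hence "is_llt (seg y J (Suc J)) J (Leaf J)" by (simp add: llt_leaf)
    thus ?thesis unfolding Inner_def P_def using LJpos by simp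
  qed
  have step2: "P (cc s)" if "P s" "b s" for s using step[OF that] by (rule conjunct1)
  have "\<exists>r. while_option b cc (Leaf J, 1, J - 1, 0) = Some r"
  proof (rule measure_while_option_Some[of P b cc f])
    fix s assume "P s" "b s" thus "P (cc s) \<and> f (cc s) < f s" by (rule step)
  next
    show "P (Leaf J, 1, J - 1, 0)" by (rule init)
  qed
  then obtain r where r: "while_option b cc (Leaf J, 1, J - 1, 0) = Some r" by blast
  have Pr: "P r" by (rule while_option_rule[of P b cc, OF step2 r init])
  have nb: "\<not> b r" using while_option_stop[OF r] .
  obtain q l k c where rr: "r = (q,l,k,c)" by (cases r) auto
  have inv: "Inner y J (ly J) q l k c" "\<not> l < ly J" using Pr nb rr unfolding P_def b_def by auto
  hence lL: "l = ly J" unfolding Inner_def by auto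
  have res: "inner_loop ly rt J = Some (q,l,k,c)" using r rr unfolding inner_loop_def b_def cc_def by simp
  have ph: "phi y (Suc J) = Suc (phi y (Suc J - ly J))" using phi_step[of "Suc J" y] J LJ by simp
  show ?thesis using inv lL res ph unfolding Inner_def by auto
qed




lemma wl_asym: "word_less u v \<Longrightarrow> \<not> word_less v u"
  using wl_trans wl_irrefl by blast

definition Per :: "'a list \<Rightarrow> nat \<Rightarrow> nat \<Rightarrow> bool" where
  "Per y P N \<longleftrightarrow> (\<forall>t<N. y!t = y!(t mod P))"

lemma per_eq: "Per y P N \<Longrightarrow> a < N \<Longrightarrow> b < N \<Longrightarrow> a mod P = b mod P \<Longrightarrow> y!a = y!b"
proof -
  assume h: "Per y P N" "a < N" "b < N" "a mod P = b mod P"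
  have "y!a = y!(a mod P)" "y!b = y!(b mod P)" using h unfolding Per_def by blast+
  thus ?thesis using h(4) by simp
qed

lemma mult_mod_add: "(P * q + i) mod P = i mod (P::nat)"
  by simp

lemma mod_add_zero_right: "s mod P = 0 \<Longrightarrow> (a + s) mod P = a mod (P::nat)"
proof -
  assume "s mod P = 0"
  have "(a + s) mod P = (a + s mod P) mod P" by (rule mod_add_right_eq[symmetric])
  thus ?thesis using \<open>s mod P = 0\<close> by simp
qed

lemma seg0_nth: "P \<le> length y \<Longrightarrow> i < P \<Longrightarrow> seg y 0 P ! i = y!i"
  using seg_nth[of P y i 0] by simp

lemma wlx_seg:
  assumes "e \<le> length y" "d < e - t" "d < e - s" "\<And>i. i < d \<Longrightarrow> y!(t+i) = y!(s+i)" "y!(t+d) < y!(s+d)"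
  shows "wlx (seg y t e) (seg y s e) d"
  unfolding wlx_def
proof (intro conjI allI impI)
  show "d < length (seg y t e)" "d < length (seg y s e)" using assms by auto
  fix i assume i: "i < d"
  have "seg y t e ! i = y!(t+i)" "seg y s e ! i = y!(s+i)" using seg_nth[OF assms(1)] i assms(2,3) by auto
  thus "seg y t e ! i = seg y s e ! i" using assms(4)[OF i] by simp
next
  have "seg y t e ! d = y!(t+d)" "seg y s e ! d = y!(s+d)" using seg_nth[OF assms(1)] assms(2,3) by auto
  thus "seg y t e ! d < seg y s e ! d" using assms(5) by simp
qed

lemma duval_neq:
  fixes y :: "'a::linorder list"
  assumes Ly: "lyndon y" and J: "J < length y" and P: "0 < P" "P \<le> J"
    and u: "lyndon (seg y 0 P)" and per: "Per y P J" and neq: "y!J \<noteq> y!(J mod P)"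
  shows "y!(J mod P) < y!J" "lyndon (seg y 0 (Suc J))"
proof -
  define r where "r = J mod P"
  define e where "e = J - r"
  have rP: "r < P" using P unfolding r_def by simp
  have e0: "e = P * (J div P)" unfolding e_def r_def by (simp add: minus_mod_eq_mult_div)
  obtain q where e: "e = P * q" using e0 by blast
  have Jre: "J = e + r" unfolding e_def r_def by simp
  have epos: "0 < e" using Jre rP P by linarith
  have rJ: "r < J" using rP P by simp
  have ymod: "y!(e+i) = y!i" if "i < r" for i
  proof -
    have "(e+i) mod P = i mod P" unfolding e by (rule mult_mod_add)
    moreover have "e + i < J" "i < J" using that Jre rJ by linarith+
    ultimately show ?thesis using per_eq[OF per, of "e+i" i] by simp
  qed
  show lt: "y!(J mod P) < y!J"
  proof (rule ccontr)
    assume "\<not> y!(J mod P) < y!J"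
    hence "y!J < y!r" using neq unfolding r_def by auto
    hence "wlx (drop e y) y r" unfolding wlx_def using ymod J Jre by auto
    hence "word_less (drop e y) y" by (rule wlx_wl)
    moreover have "word_less y (drop e y)" using lyndon_suffix[OF Ly epos] J Jre by simp
    ultimately show False using wl_asym by blast
  qed
  show "lyndon (seg y 0 (Suc J))"
  proof (rule lyndon_segI)
    show "0 < Suc J" "Suc J \<le> length y" using J by auto
    fix s assume s: "0 < s" "s < Suc J"
    have zn: "seg y 0 (Suc J) ! i = y!i" if "i < Suc J" for i using seg_nth[of "Suc J" y i 0] J that by simp
    have sn: "seg y s (Suc J) ! i = y!(s+i)" if "i < Suc J - s" for i using seg_nth[of "Suc J" y i s] J that by simp
    have lens: "length (seg y 0 (Suc J)) = Suc J" "length (seg y s (Suc J)) = Suc J - s" using J by auto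
    have "\<exists>d. wlx (seg y 0 (Suc J)) (seg y s (Suc J)) d"
    proof (cases "s mod P = 0")
      case True
      have agree: "y!i = y!(s+i)" if "i < J - s" for i
        using per_eq[OF per, of i "s+i"] that mod_add_zero_right[OF True, of i] by (simp add: add.commute)
      have "(J - s) mod P = J mod P" using mod_add_zero_right[OF True, of "J-s"] s by simp
      hence "y!(J-s) = y!r" using per_eq[OF per, of "J-s" r] s rJ rP unfolding r_def by simp
      hence "y!(J-s) < y!(s + (J - s))" using lt s unfolding r_def by simp
      hence "wlx (seg y 0 (Suc J)) (seg y s (Suc J)) (J - s)"
        using wlx_seg[of "Suc J" y "J - s" 0 s] J s agree by simp
      thus ?thesis by blast
    next
      case False
      define s' where "s' = s mod P"
      have s': "0 < s'" "s' < P" using False P unfolding s'_def by auto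
      have Pn: "P \<le> length y" using P J by simp
      have "word_less (seg y 0 P) (seg y s' P)" using lyndon_seg_suffix[OF u s'(1) s'(2) Pn] .
      then obtain d0 where "wlx (seg y 0 P) (seg y s' P) d0" using wl_wlx Pn by fastforce
      hence d0: "d0 < P - s'" "\<And>i. i < d0 \<Longrightarrow> y!i = y!(s'+i)" "y!d0 < y!(s'+d0)"
        unfolding wlx_def using seg0_nth[OF Pn] seg_nth[OF Pn] Pn by auto
      have shift: "y!(s'+i) = y!(s+i)" if "s + i < J" for i
        using per_eq[OF per, of "s'+i" "s+i"] that s' P mod_less_eq_dividend[of s P] unfolding s'_def by (simp add: mod_add_left_eq)
      define m where "m = J - s"
      show ?thesis
      proof (cases "d0 < m")
        case True
        have "wlx (seg y 0 (Suc J)) (seg y s (Suc J)) d0"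
          using wlx_seg[of "Suc J" y d0 0 s] J s True d0 shift unfolding m_def by simp
        thus ?thesis by blast
      next
        case False
        have le: "y!m \<le> y!(s'+m)"
        proof (cases "m < d0")
          case True thus ?thesis using d0(2) by simp
        next
          case False thus ?thesis using d0(3) \<open>\<not> d0 < m\<close> by simp
        qed
        have "(s' + m) mod P = (s + m) mod P" unfolding s'_def by (simp add: mod_add_left_eq)
        also have "s + m = J" using s unfolding m_def by simp
        finally have "(s' + m) mod P = r mod P" using rP unfolding r_def by simp
        hence "y!(s'+m) = y!r" using per_eq[OF per, of "s'+m" r] False d0(1) P rJ by simp
        hence "y!m < y!(s+m)" using le lt s unfolding m_def r_def by simp
        hence "wlx (seg y 0 (Suc J)) (seg y s (Suc J)) m"
          using wlx_seg[of "Suc J" y m 0 s] J s False d0 shift unfolding m_def by simp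
        thus ?thesis by blast
      qed
    qed
    thus "word_less (seg y 0 (Suc J)) (seg y s (Suc J))" using wlx_wl by blast
  qed
qed

lemma duval_eq:
  fixes y :: "'a::linorder list"
  assumes J: "J < length y" and P: "0 < P" "P \<le> J"
    and u: "lyndon (seg y 0 P)" and per: "Per y P (Suc J)" and LS: "isLS y (Suc (J mod P)) L"
  shows "isLS y (Suc J) L"
proof -
  define r where "r = J mod P"
  define e where "e = J - r"
  have rP: "r < P" using P unfolding r_def by simp
  have e0: "e = P * (J div P)" unfolding e_def r_def by (simp add: minus_mod_eq_mult_div)
  obtain q where e: "e = P * q" using e0 by blast
  have Jre: "J = e + r" unfolding e_def r_def by simp
  have rJ: "r < J" using rP P by simp
  have emod: "(e + a) mod P = a mod P" for a unfolding e by (rule mult_mod_add)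
  have Jn: "Suc J \<le> length y" using J by simp
  have L: "0 < L" "L \<le> Suc r" "lyndon (seg y (Suc r - L) (Suc r))"
    "\<And>M. L < M \<Longrightarrow> M \<le> Suc r \<Longrightarrow> \<not> lyndon (seg y (Suc r - M) (Suc r))"
    using LS unfolding isLS_def r_def by auto
  have shift: "seg y (e + a) (Suc J) = seg y a (Suc r)" if a: "a \<le> Suc r" for a
  proof (rule seg_eqI[OF Jn])
    show "Suc r \<le> length y" using Jn rJ by simp
    show "Suc J - (e + a) = Suc r - a" using Jre by simp
    fix i assume i: "i < Suc J - (e + a)"
    have "e + a + i < Suc J" "a + i < Suc J" using i Jre by auto
    moreover have "(e + a + i) mod P = (a + i) mod P" using emod[of "a+i"] by (simp add: add.assoc)
    ultimately show "y!(e + a + i) = y!(a + i)" using per_eq[OF per] by blast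
  qed
  show ?thesis unfolding isLS_def
  proof (intro conjI allI impI)
    show "0 < L" by (rule L(1))
    show "L \<le> Suc J" using L(2) rJ by simp
    have "Suc J - L = e + (Suc r - L)" using Jre L(2) by simp
    thus "lyndon (seg y (Suc J - L) (Suc J))" using shift[of "Suc r - L"] L(3) by simp
    fix M assume M: "L < M \<and> M \<le> Suc J"
    define s where "s = Suc J - M"
    have sJ: "s < Suc J" "s \<le> J" using M L(1) unfolding s_def by auto
    show "\<not> lyndon (seg y (Suc J - M) (Suc J))"
    proof
      assume lv: "lyndon (seg y (Suc J - M) (Suc J))"
      hence lv: "lyndon (seg y s (Suc J))" unfolding s_def .
      show False
      proof (cases "e \<le> s")
        case True
        have "seg y s (Suc J) = seg y (s - e) (Suc r)" using shift[of "s - e"] True sJ Jre by simp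
        moreover have "M \<le> Suc r" "Suc r - M = s - e" using True M Jre unfolding s_def by auto
        ultimately show False using L(4)[of M] M lv by simp
      next
        case False
        hence se: "s < e" by simp
        have eJ: "e \<le> J" using Jre by simp
        show False
        proof (cases "s mod P = 0")
          case True
          have w: "word_less (seg y s (Suc J)) (seg y e (Suc J))"
            using lyndon_seg_suffix[OF lv se] eJ Jn by simp
          have "take (Suc J - e) (seg y s (Suc J)) = seg y s (s + (Suc J - e))"
            using seg_take[of s "s + (Suc J - e)" "Suc J" y] se eJ Jn by simp
          also have "\<dots> = seg y e (Suc J)"
          proof (rule seg_eqI)
            show "s + (Suc J - e) \<le> length y" "Suc J \<le> length y" using se eJ Jn by auto
            show "s + (Suc J - e) - s = Suc J - e" by simp
            fix i assume i: "i < s + (Suc J - e) - s"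
            have "(s + i) mod P = i mod P" using mod_add_zero_right[OF True, of i] by (simp add: add.commute)
            moreover have "(e + i) mod P = i mod P" by (rule emod)
            moreover have "s + i < Suc J" "e + i < Suc J" using i se eJ by auto
            ultimately show "y!(s+i) = y!(e+i)" using per_eq[OF per] by metis
          qed
          finally have "take (length (seg y e (Suc J))) (seg y s (Suc J)) = seg y e (Suc J)" using Jn by simp
          hence "\<not> word_less (seg y s (Suc J)) (seg y e (Suc J))" by (rule prefix_not_wl)
          thus False using w by simp
        next
          case False
          define s' where "s' = s mod P"
          have s': "0 < s'" "s' < P" "s' \<le> s" using False P unfolding s'_def by auto
          define b where "b = P * (s div P) + P"
          have sdiv: "P * (s div P) = s - s'" unfolding s'_def by (simp add: minus_mod_eq_mult_div)
          have "s div P < q" using less_mult_imp_div_less[of s q P] se e by (simp add: mult.commute)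
          hence "P * Suc (s div P) \<le> P * q" by (intro mult_le_mono2) simp
          hence be: "b \<le> e" unfolding b_def e by simp
          have sb: "s < b" using sdiv s' unfolding b_def by simp
          have bmod: "(b + i) mod P = i mod P" for i
            unfolding b_def by (metis add.assoc mult_Suc_right mult_mod_add add.commute)
          have Pn: "P \<le> length y" using P J by simp
          have "word_less (seg y 0 P) (seg y s' P)" using lyndon_seg_suffix[OF u s'(1) s'(2) Pn] .
          then obtain d0 where "wlx (seg y 0 P) (seg y s' P) d0" using wl_wlx Pn by fastforce
          hence d0: "d0 < P - s'" "\<And>i. i < d0 \<Longrightarrow> y!i = y!(s'+i)" "y!d0 < y!(s'+d0)"
            unfolding wlx_def using seg0_nth[OF Pn] seg_nth[OF Pn] Pn by auto
          have sh2: "y!(s'+i) = y!(s+i)" if "s + i < Suc J" for i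
            using per_eq[OF per, of "s'+i" "s+i"] that s' unfolding s'_def by (simp add: mod_add_left_eq)
          have sh1: "y!(b+i) = y!i" if "b + i < Suc J" for i
            using per_eq[OF per, of "b+i" i] that bmod by simp
          have w: "word_less (seg y s (Suc J)) (seg y b (Suc J))"
            using lyndon_seg_suffix[OF lv sb] be eJ Jn by simp
          show False
          proof (cases "d0 < Suc J - b")
            case True
            have "wlx (seg y b (Suc J)) (seg y s (Suc J)) d0"
            proof (rule wlx_seg[OF Jn])
              show "d0 < Suc J - b" "d0 < Suc J - s" using True sb by auto
              fix i assume i: "i < d0"
              hence "b + i < Suc J" "s + i < Suc J" using True sb by auto
              thus "y!(b+i) = y!(s+i)" using sh1 sh2 d0(2)[OF i] by simp
            next
              have "b + d0 < Suc J" "s + d0 < Suc J" using True sb by auto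
              thus "y!(b+d0) < y!(s+d0)" using sh1 sh2 d0(3) by simp
            qed
            hence "word_less (seg y b (Suc J)) (seg y s (Suc J))" by (rule wlx_wl)
            thus False using w wl_asym by blast
          next
            case False
            have "take (Suc J - b) (seg y s (Suc J)) = seg y s (s + (Suc J - b))"
              using seg_take[of s "s + (Suc J - b)" "Suc J" y] sb be eJ Jn by simp
            also have "\<dots> = seg y b (Suc J)"
            proof (rule seg_eqI)
              show "s + (Suc J - b) \<le> length y" "Suc J \<le> length y" using sb be eJ Jn by auto
              show "s + (Suc J - b) - s = Suc J - b" by simp
              fix i assume i: "i < s + (Suc J - b) - s"
              hence "i < d0" "s + i < Suc J" "b + i < Suc J" using False sb be eJ by auto
              thus "y!(s+i) = y!(b+i)" using sh1 sh2 d0(2) by simp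
            qed
            finally have "take (length (seg y b (Suc J))) (seg y s (Suc J)) = seg y b (Suc J)" using Jn by simp
            hence "\<not> word_less (seg y s (Suc J)) (seg y b (Suc J))" by (rule prefix_not_wl)
            thus False using w by simp
          qed
        qed
      qed
    qed
  qed
qed




definition OutInv :: "'a::linorder list \<Rightarrow> nat \<Rightarrow> alg_state \<Rightarrow> bool" where
  "OutInv y m s \<longleftrightarrow> 0 < per s \<and> per s \<le> Suc m \<and> lyndon (seg y 0 (per s)) \<and> Per y (per s) (Suc m) \<and>
     ii s = Suc m mod per s \<and> (\<forall>t\<le>m. lyns s t = LSf y (Suc t)) \<and>
     (\<forall>t\<le>m. is_llt (seg y (Suc t - lyns s t) (Suc t)) (Suc t - lyns s t) (root s t)) \<and>
     cost s + phi y (Suc m) \<le> 2*m + 1"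

lemma isLS_full: "0 < p \<Longrightarrow> lyndon (seg y 0 p) \<Longrightarrow> isLS y p p"
  unfolding isLS_def by auto

lemma out_step:
  fixes y :: "'a::linorder list"
  assumes Ly: "lyndon y" and J: "Suc m < length y" and inv: "OutInv y m s"
  shows "\<exists>s'. alg_step (\<lambda>i j. y!i = y!j) (Suc m) s = Some s' \<and> OutInv y (Suc m) s'"
proof -
  define J where "J = Suc m"
  define P where "P = per s"
  have I: "0 < P" "P \<le> J" "lyndon (seg y 0 P)" "Per y P J" "ii s = J mod P"
    "\<forall>t\<le>m. lyns s t = LSf y (Suc t)"
    "\<forall>t\<le>m. is_llt (seg y (Suc t - lyns s t) (Suc t)) (Suc t - lyns s t) (root s t)"
    "cost s + phi y J \<le> 2*m + 1"
    using inv unfolding OutInv_def P_def J_def by auto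
  have Jn: "J < length y" using J unfolding J_def .
  define s1 where "s1 = (if \<not> y!J = y!(ii s)
                then s\<lparr> lyns := (lyns s)(J := J + 1), per := J + 1, ii := 0 \<rparr>
                else s\<lparr> lyns := (lyns s)(J := lyns s (ii s)), ii := (ii s + 1) mod per s \<rparr>)"
  have A: "0 < per s1 \<and> per s1 \<le> Suc J \<and> lyndon (seg y 0 (per s1)) \<and> Per y (per s1) (Suc J) \<and>
     ii s1 = Suc J mod per s1 \<and> lyns s1 J = LSf y (Suc J) \<and> (\<forall>t<J. lyns s1 t = lyns s t) \<and>
     root s1 = root s \<and> cost s1 = cost s"
  proof (cases "y!J = y!(ii s)")
    case False
    hence neq: "y!J \<noteq> y!(J mod P)" using I(5) by simp
    have lz: "lyndon (seg y 0 (Suc J))" using duval_neq(2)[OF Ly Jn I(1,2,3,4) neq] .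
    have "LSf y (Suc J) = Suc J" using LSf_eq[OF _ _ isLS_full[OF _ lz]] Jn by simp
    moreover have "Per y (Suc J) (Suc J)" unfolding Per_def by simp
    ultimately show ?thesis using False lz unfolding s1_def by simp
  next
    case True
    define r where "r = J mod P"
    have "r < P" using I(1) unfolding r_def by simp
    hence rm: "r \<le> m" using I(2) unfolding J_def by simp
    have ly_r: "lyns s (ii s) = LSf y (Suc r)" using I(5,6) rm unfolding r_def by simp
    have per': "Per y P (Suc J)" unfolding Per_def
    proof (intro allI impI)
      fix t assume "t < Suc J"
      thus "y!t = y!(t mod P)" using I(4) True I(5) unfolding Per_def by (cases "t = J") auto
    qed
    have "isLS y (Suc r) (LSf y (Suc r))" using LSf_isLS[of "Suc r" y] rm Jn unfolding J_def by simp
    hence "isLS y (Suc J) (LSf y (Suc r))" using duval_eq[OF Jn I(1,2,3) per'] unfolding r_def by simp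
    hence "LSf y (Suc J) = LSf y (Suc r)" using LSf_eq[of "Suc J" y] Jn by simp
    moreover have "(ii s + 1) mod P = Suc J mod P" using I(5) by (simp add: mod_Suc_eq)
    ultimately show ?thesis using True I(1,2,3) per' ly_r unfolding s1_def P_def by simp
  qed
  have ly: "\<forall>t \<le> J. lyns s1 t = LSf y (Suc t)"
  proof (intro allI impI)
    fix t assume "t \<le> J"
    thus "lyns s1 t = LSf y (Suc t)" using A I(6) by (cases "t = J") (auto simp: J_def)
  qed
  have rt: "\<forall>t < J. is_llt (seg y (Suc t - lyns s1 t) (Suc t)) (Suc t - lyns s1 t) (root s1 t)"
  proof (intro allI impI)
    fix t assume "t < J"
    thus "is_llt (seg y (Suc t - lyns s1 t) (Suc t)) (Suc t - lyns s1 t) (root s1 t)"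
      using A I(7) unfolding J_def by auto
  qed
  obtain q l k c where il: "inner_loop (lyns s1) (root s1) J = Some (q,l,k,c)"
    and tq: "is_llt (seg y (Suc J - lyns s1 J) (Suc J)) (Suc J - lyns s1 J) q"
    and ph: "c + phi y (Suc J) = Suc (phi y J)"
    using inner_loop_correct[of J y "lyns s1" "root s1", OF _ ly rt] Jn by auto
  define s' where "s' = s1\<lparr> root := (root s1)(J := q), cost := cost s1 + 1 + c \<rparr>"
  have step: "alg_step (\<lambda>i j. y!i = y!j) J s = Some s'"
    unfolding alg_step_def Let_def s'_def using il unfolding s1_def by simp
  have "OutInv y J s'"
    unfolding OutInv_def
  proof (intro conjI allI impI)
    show "0 < per s'" "per s' \<le> Suc J" "lyndon (seg y 0 (per s'))" "Per y (per s') (Suc J)"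
      "ii s' = Suc J mod per s'" using A unfolding s'_def by auto
    fix t assume t: "t \<le> J"
    show "lyns s' t = LSf y (Suc t)" using ly t unfolding s'_def by simp
  next
    fix t assume t: "t \<le> J"
    show "is_llt (seg y (Suc t - lyns s' t) (Suc t)) (Suc t - lyns s' t) (root s' t)"
    proof (cases "t = J")
      case True thus ?thesis using tq unfolding s'_def by simp
    next
      case False thus ?thesis using rt t unfolding s'_def by simp
    qed
  next
    show "cost s' + phi y (Suc J) \<le> 2 * J + 1" using A ph I(8) unfolding s'_def J_def by simp
  qed
  thus ?thesis using step unfolding J_def by blast
qed

lemma out_init:
  fixes y :: "'a::linorder list"
  assumes "0 < length y"
  shows "OutInv y 0 alg_init"
proof -
  have s1: "seg y 0 1 = [y!0]" using seg_single[of 0 y] assms by simp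
  have l1: "LSf y 1 = 1" using LSf_pos[of 1 y] LSf_le[of 1 y] assms by simp
  have p1: "phi y 1 = 1" using phi_step[of 1 y] assms l1 by (simp add: phi.simps)
  show ?thesis unfolding OutInv_def alg_init_def Per_def
    using s1 l1 p1 lyndon_single llt_leaf[of "[y!0]" 0] by simp
qed

lemma out_run:
  fixes y :: "'a::linorder list"
  assumes Ly: "lyndon y"
  shows "m < length y \<Longrightarrow> \<exists>s. alg_run (\<lambda>i j. y!i = y!j) m = Some s \<and> OutInv y m s"
proof (induction m)
  case 0 thus ?case using out_init by simp
next
  case (Suc m)
  then obtain s where s: "alg_run (\<lambda>i j. y!i = y!j) m = Some s" "OutInv y m s" by auto
  obtain s' where "alg_step (\<lambda>i j. y!i = y!j) (Suc m) s = Some s'" "OutInv y (Suc m) s'"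
    using out_step[OF Ly Suc.prems s(2)] by blast
  thus ?case using s by simp
qed

theorem proposition4:
  "\<exists>c::nat. \<forall>y :: 'a::linorder list. lyndon y \<longrightarrow>
     (\<exists>t cst. left_lyndon_tree (length y) (\<lambda>i j. y ! i = y ! j) = Some (t, cst)
              \<and> is_llt y 0 t \<and> cst \<le> c * length y)"
proof (intro exI[of _ 2] allI impI)
  fix y :: "'a list" assume Ly: "lyndon y"
  define n where "n = length y"
  have n: "0 < n" using Ly unfolding lyndon_def n_def by simp
  obtain s where s: "alg_run (\<lambda>i j. y!i = y!j) (n - 1) = Some s" "OutInv y (n - 1) s"
    using out_run[OF Ly, of "n - 1"] n unfolding n_def by auto
  have "lyns s (n-1) = LSf y n" using s(2) n unfolding OutInv_def by simp
  also have "\<dots> = n" using LSf_eq[OF _ _ isLS_full[of n y]] n seg_full[of y] Ly unfolding n_def by simp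
  finally have ln: "lyns s (n-1) = n" .
  have "\<forall>t\<le>n-1. is_llt (seg y (Suc t - lyns s t) (Suc t)) (Suc t - lyns s t) (root s t)"
    using s(2) unfolding OutInv_def by blast
  hence "is_llt (seg y (Suc (n-1) - lyns s (n-1)) (Suc (n-1))) (Suc (n-1) - lyns s (n-1)) (root s (n-1))"
    by blast
  hence tr: "is_llt y 0 (root s (n-1))" using ln n seg_full[of y] unfolding n_def by simp
  have "cost s \<le> 2 * (n - 1) + 1" using s(2) unfolding OutInv_def by simp
  hence cs: "cost s \<le> 2 * n" using n by simp
  have "left_lyndon_tree (length y) (\<lambda>i j. y ! i = y ! j) = Some (root s (n-1), cost s)"
    unfolding left_lyndon_tree_def n_def[symmetric] using s(1) by simp
  thus "\<exists>t cst. left_lyndon_tree (length y) (\<lambda>i j. y ! i = y ! j) = Some (t, cst) \<and> is_llt y 0 t \<and> cst \<le> 2 * length y"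
    using tr cs unfolding n_def by blast
qed


end
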